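(* For every $t\in\mathbb Z$, the process $(\overline{\bm Z}^{(t)}_s)_{s\ge t}$ has the distribution of a random walk started at $0$ whose step distribution is that of the increments of $\overline{\bm Y}$ (which is the same as that of $-\overline{\bm X}$).
   Context: Let $\nu=\frac12\delta_{(1,-1)}+\sum_{i,j\ge0}2^{-i-j-3}\delta_{(-i,j)}$ on $\mathbb Z^2$ and $\overline{\bm W}=(\overline{\bm X},\overline{\bm Y})=(\overline{\bm W}_t)_{t\in\mathbb Z}$ a two-sided random walk with i.i.d. steps of law $\nu$ and $\overline{\bm W}_0=(0,0)$. Its coalescent-walk process $\overline{\bm Z}=\{\overline{\bm Z}^{(t)}\}_{t\in\mathbb Z}$ is defined by $\overline{\bm Z}^{(t)}_t=0$ and, for $\ell\ge t$: if $\overline{\bm W}_{\ell+1}-\overline{\bm W}_\ell=(1,-1)$ then $\overline{\bm Z}^{(t)}_{\ell+1}-\overline{\bm Z}^{(t)}_\ell=-1$; if $\overline{\bm W}_{\ell+1}-\overline{\bm W}_\ell=(-i,j)$ with $i,j\ge0$, the increment is $j$ if $\overline{\bm Z}^{(t)}_\ell\ge0$, $i$ if $\overline{\bm Z}^{(t)}_\ell<-i$, and $j-\overline{\bm Z}^{(t)}_\ell$ if $-i\le\overline{\bm Z}^{(t)}_\ell<0$. *)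

theory Defs
  imports "HOL-Probability.Probability"
begin

definition nu_mass :: "int \<times> int \<Rightarrow> real" where
  "nu_mass w = (if w = (1, -1) then 1/2
     else if fst w \<le> 0 \<and> snd w \<ge> 0
       then (1/2) ^ (nat (- fst w) + nat (snd w) + 3) else 0)"

definition nu :: "(int \<times> int) pmf" where
  "nu = embed_pmf nu_mass"

text \<open>Increment of a coalescent walk at position z when the step of the
  driving walk is w = W_(l+1) - W_l.  For w = (-i, j) with i,j >= 0:
  j if z >= 0;  i if z < -i;  j - z if -i <= z < 0.\<close>
definition cw_inc :: "int \<times> int \<Rightarrow> int \<Rightarrow> int" where
  "cw_inc w z = (if w = (1, -1) then -1
     else if z \<ge> 0 then snd w
     else if z < fst w then - fst w
     else snd w - z)"

text \<open>Coalescent walk started at time t, driven by the step sequence xi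
  (xi l = W_(l+1) - W_l).  cwp xi t n is the value Z^(t)_(t+n).\<close>
fun cwp :: "(int \<Rightarrow> int \<times> int) \<Rightarrow> int \<Rightarrow> nat \<Rightarrow> int" where
  "cwp xi t 0 = 0"
| "cwp xi t (Suc n) = cwp xi t n + cw_inc (xi (t + int n)) (cwp xi t n)"

end

theory Submission
  imports Defs
begin

abbreviation geo :: "nat pmf" where "geo \<equiv> geometric_pmf (1/2)"
abbreviation GG :: "(nat \<times> nat) pmf" where "GG \<equiv> pair_pmf geo geo"
definition TT :: "(bool \<times> nat \<times> nat) pmf" where "TT = pair_pmf (bernoulli_pmf (1/2)) GG"
definition phi :: "bool \<times> nat \<times> nat \<Rightarrow> int \<times> int" where
  "phi x = (if fst x then (1, -1) else (- int (fst (snd x)), int (snd (snd x))))"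

lemma pmf_geo: "pmf geo n = (1/2)^(Suc n)"
  by simp

lemma nu_mass_eq: "nu_mass w = pmf (map_pmf phi TT) w"
proof -
  obtain a b where w: "w = (a, b)" by fastforce
  show ?thesis
  proof (cases "w = (1, -1)")
    case True
    have "phi -` {w} = {True} \<times> UNIV" using True by (auto simp: phi_def split: if_splits)
    then have "pmf (map_pmf phi TT) w = measure_pmf.prob (bernoulli_pmf (1/2)) {True} * measure_pmf.prob GG UNIV"
      unfolding pmf_map TT_def by (simp add: measure_pmf_prob_product)
    then show ?thesis using True by (simp add: nu_mass_def measure_pmf_single)
  next
    case False
    show ?thesis
    proof (cases "a \<le> 0 \<and> b \<ge> 0")
      case True
      have "phi -` {w} = {(False, nat (-a), nat b)}" using True False w
        by (auto simp: phi_def split: if_splits)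
      then have "pmf (map_pmf phi TT) w = pmf TT (False, nat (-a), nat b)"
        unfolding pmf_map by (simp add: measure_pmf_single)
      also have "\<dots> = (1/2) * ((1/2)^(Suc (nat (-a))) * (1/2)^(Suc (nat b)))"
        unfolding TT_def by (simp only: pmf_pair pmf_geo pmf_bernoulli_half)
      also have "\<dots> = (1/2)^(nat (-a) + nat b + 3)"
        by (simp add: power_add numeral_eq_Suc)
      finally show ?thesis using True False w by (simp add: nu_mass_def)
    next
      case F2: False
      have "phi -` {w} = {}" using F2 False w
        by (auto simp: phi_def split: if_splits)
      then show ?thesis using F2 False w by (simp add: nu_mass_def pmf_map)
    qed
  qed
qed

lemma nu_eq: "nu = map_pmf phi TT"
proof -
  have "nu_mass = pmf (map_pmf phi TT)" using nu_mass_eq by auto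
  then show ?thesis unfolding nu_def by (metis type_definition.Rep_inverse[OF td_pmf_embed_pmf])
qed


lemma geo_lessThan: "measure_pmf.prob geo {..<m} = 1 - (1/2)^m"
proof (induction m)
  case 0 then show ?case by simp
next
  case (Suc m)
  have "measure_pmf.prob geo {..<Suc m} = sum (pmf geo) {..<Suc m}"
    by (rule measure_measure_pmf_finite) simp
  also have "\<dots> = sum (pmf geo) {..<m} + pmf geo m" by simp
  also have "sum (pmf geo) {..<m} = measure_pmf.prob geo {..<m}"
    by (rule measure_measure_pmf_finite[symmetric]) simp
  finally show ?case using Suc by simp
qed

lemma geo_atLeast: "measure_pmf.prob geo {m..} = (1/2)^m"
proof -
  have "{m..} = UNIV - {..<m}" by auto
  then have "measure_pmf.prob geo {m..} = 1 - measure_pmf.prob geo {..<m}"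
    using measure_pmf.prob_compl[of "{..<m}" geo] by simp
  then show ?thesis by (simp add: geo_lessThan)
qed

lemma memoryless: "map_pmf (\<lambda>(i,j). if i < m then i else j + m) GG = geo"
proof (rule pmf_eqI)
  fix a :: nat
  show "pmf (map_pmf (\<lambda>(i,j). if i < m then i else j + m) GG) a = pmf geo a"
  proof (cases "a < m")
    case True
    have "(\<lambda>(i,j). if i < m then i else j + m) -` {a} = {a} \<times> UNIV" using True by auto
    then show ?thesis by (simp add: pmf_map measure_pmf_prob_product measure_pmf_single)
  next
    case False
    have "(\<lambda>(i,j). if i < m then i else j + m) -` {a} = {m..} \<times> {a - m}" using False by (auto split: if_splits)
    then have "pmf (map_pmf (\<lambda>(i,j). if i < m then i else j + m) GG) a = (1/2)^m * pmf geo (a - m)"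
      by (simp add: pmf_map measure_pmf_prob_product measure_pmf_single geo_atLeast del: pmf_geometric)
    also have "\<dots> = pmf geo a" using False
      by (simp add: power_add[symmetric])
    finally show ?thesis .
  qed
qed

definition psi :: "bool \<times> nat \<times> nat \<Rightarrow> int" where
  "psi x = (if fst x then -1 else int (snd (snd x)))"

lemma map_pair_bern:
  assumes "map_pmf g GG = map_pmf g' GG"
  shows "map_pmf (\<lambda>x. if fst x then c else g (snd x)) TT = map_pmf (\<lambda>x. if fst x then c else g' (snd x)) TT"
proof -
  have *: "map_pmf (\<lambda>x. if fst x then c else h (snd x)) TT =
     bind_pmf (bernoulli_pmf (1/2)) (\<lambda>b. if b then return_pmf c else map_pmf h GG)" for h
    unfolding TT_def pair_pmf_def map_bind_pmf
    by (intro bind_pmf_cong refl) (auto simp: map_bind_pmf map_pmf_def[symmetric] map_pmf_comp o_def)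
  show ?thesis by (simp only: * assms)
qed

lemma step_psi: "map_pmf snd nu = map_pmf psi TT"
  unfolding nu_eq map_pmf_comp by (intro map_pmf_cong) (auto simp: phi_def psi_def)

lemma step_sym: "map_pmf snd nu = map_pmf (\<lambda>w. - fst w) nu"
proof -
  have "map_pmf (\<lambda>w. - fst w) nu = map_pmf (\<lambda>x. if fst x then -1 else (\<lambda>y. int (fst y)) (snd x)) TT"
    unfolding nu_eq map_pmf_comp by (intro map_pmf_cong) (auto simp: phi_def)
  also have "\<dots> = map_pmf (\<lambda>x. if fst x then -1 else (\<lambda>y. int (snd y)) (snd x)) TT"
  proof (rule map_pair_bern)
    show "map_pmf (\<lambda>y. int (fst y)) GG = map_pmf (\<lambda>y. int (snd y)) GG"
      by (subst pair_commute_pmf) (simp add: map_pmf_comp split_beta)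
  qed
  also have "\<dots> = map_pmf snd nu" unfolding step_psi psi_def by simp
  finally show ?thesis ..
qed

lemma key_step: "map_pmf (\<lambda>w. cw_inc w z) nu = map_pmf snd nu"
proof -
  define m where "m = nat (- z)"
  have "map_pmf (\<lambda>w. cw_inc w z) nu = map_pmf (\<lambda>x. if fst x then -1 else
      (\<lambda>y. if z \<ge> 0 then int (snd y) else int (if fst y < m then fst y else snd y + m)) (snd x)) TT"
    unfolding nu_eq map_pmf_comp by (intro map_pmf_cong) (auto simp: phi_def cw_inc_def m_def)
  also have "\<dots> = map_pmf (\<lambda>x. if fst x then -1 else (\<lambda>y. int (snd y)) (snd x)) TT"
  proof (rule map_pair_bern)
    show "map_pmf (\<lambda>y. if z \<ge> 0 then int (snd y) else int (if fst y < m then fst y else snd y + m)) GG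
        = map_pmf (\<lambda>y. int (snd y)) GG"
    proof (cases "z \<ge> 0")
      case True then show ?thesis by simp
    next
      case False
      have "map_pmf (\<lambda>y. if z \<ge> 0 then int (snd y) else int (if fst y < m then fst y else snd y + m)) GG
          = map_pmf int (map_pmf (\<lambda>(i,j). if i < m then i else j + m) GG)"
        using False by (simp add: map_pmf_comp split_beta)
      also have "\<dots> = map_pmf int geo" by (simp only: memoryless)
      also have "\<dots> = map_pmf (\<lambda>y. int (snd y)) GG"
        by (simp add: map_pmf_comp[symmetric] map_snd_pair_pmf)
      finally show ?thesis .
    qed
  qed
  also have "\<dots> = map_pmf snd nu" unfolding step_psi psi_def by simp
  finally show ?thesis .
qed


fun walk :: "(nat \<Rightarrow> int \<times> int) \<Rightarrow> nat \<Rightarrow> int" where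
  "walk f 0 = 0"
| "walk f (Suc n) = walk f n + cw_inc (f n) (walk f n)"

definition incs :: "(nat \<Rightarrow> int \<times> int) \<Rightarrow> nat \<Rightarrow> int" where
  "incs f n = cw_inc (f n) (walk f n)"

lemma walk_sum: "walk f n = (\<Sum>k<n. incs f k)"
  by (induction n) (auto simp: incs_def)

lemma walk_local: "(\<And>k. k < n \<Longrightarrow> f k = g k) \<Longrightarrow> walk f n = walk g n"
  by (induction n) auto

lemma incs_local: "(\<And>k. k \<le> n \<Longrightarrow> f k = g k) \<Longrightarrow> incs f n = incs g n"
  unfolding incs_def by (metis le_refl less_imp_le walk_local)

lemma cwp_walk: "cwp xi t n = walk (\<lambda>k. xi (t + int k)) n"
  by (induction n) auto

definition H :: "nat \<Rightarrow> (nat \<Rightarrow> int \<times> int) \<Rightarrow> nat \<Rightarrow> int" where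
  "H n f = (\<lambda>k. if k < n then incs f k else 0)"

lemma H_Suc: "H (Suc n) (f(n := y)) = (H n f)(n := cw_inc y (\<Sum>k<n. H n f k))"
proof -
  have w: "walk (f(n := y)) n = walk f n" by (rule walk_local) auto
  have s: "(\<Sum>k<n. H n f k) = walk f n" by (simp add: H_def walk_sum)
  show ?thesis
  proof
    fix k show "H (Suc n) (f(n := y)) k = ((H n f)(n := cw_inc y (\<Sum>k<n. H n f k))) k"
    proof (cases "k < n")
      case True
      have "incs (f(n := y)) k = incs f k" by (rule incs_local) (use True in auto)
      then show ?thesis using True by (simp add: H_def)
    next
      case False
      then show ?thesis using w s by (auto simp: H_def incs_def)
    qed
  qed
qed

lemma Pi_H: "map_pmf (H n) (Pi_pmf {..<n} d (\<lambda>_. nu)) = Pi_pmf {..<n} 0 (\<lambda>_. map_pmf snd nu)"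
proof (induction n)
  case 0
  then show ?case by (simp add: H_def fun_eq_iff)
next
  case (Suc n)
  let ?P = "Pi_pmf {..<n} d (\<lambda>_. nu)"
  let ?S = "map_pmf snd nu"
  have ins: "{..<Suc n} = insert n {..<n}" by auto
  have "map_pmf (H (Suc n)) (Pi_pmf {..<Suc n} d (\<lambda>_. nu))
      = map_pmf (H (Suc n)) (do {y \<leftarrow> nu; f \<leftarrow> ?P; return_pmf (f(n := y))})"
    unfolding ins by (subst Pi_pmf_insert') auto
  also have "\<dots> = do {f \<leftarrow> ?P; y \<leftarrow> nu; return_pmf (H (Suc n) (f(n := y)))}"
    by (subst bind_commute_pmf) (simp add: map_bind_pmf map_return_pmf)
  also have "\<dots> = do {f \<leftarrow> ?P; map_pmf (\<lambda>a. (H n f)(n := a)) (map_pmf (\<lambda>y. cw_inc y (\<Sum>k<n. H n f k)) nu)}"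
    by (simp add: H_Suc map_pmf_def bind_assoc_pmf bind_return_pmf)
  also have "\<dots> = do {f \<leftarrow> ?P; map_pmf (\<lambda>a. (H n f)(n := a)) ?S}"
    by (simp only: key_step)
  also have "\<dots> = do {g \<leftarrow> map_pmf (H n) ?P; map_pmf (\<lambda>a. g(n := a)) ?S}"
    by (simp add: bind_map_pmf)
  also have "\<dots> = do {g \<leftarrow> Pi_pmf {..<n} 0 (\<lambda>_. ?S); a \<leftarrow> ?S; return_pmf (g(n := a))}"
    unfolding Suc by (simp add: map_pmf_def)
  also have "\<dots> = do {a \<leftarrow> ?S; g \<leftarrow> Pi_pmf {..<n} 0 (\<lambda>_. ?S); return_pmf (g(n := a))}"
    by (rule bind_commute_pmf)
  also have "\<dots> = Pi_pmf {..<Suc n} 0 (\<lambda>_. ?S)"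
    unfolding ins by (subst Pi_pmf_insert') auto
  finally show ?case .
qed


lemma sets_fin_cnt:
  assumes "finite I" "X \<subseteq> space (PiM I (\<lambda>_. count_space (UNIV::'a::countable set)))"
  shows "X \<in> sets (PiM I (\<lambda>_. count_space (UNIV::'a set)))"
proof (rule sets.countable)
  show "countable X"
    by (rule countable_subset[OF assms(2)]) (auto simp: space_PiM intro!: countable_PiE assms(1))
  fix g assume "g \<in> X"
  then have g: "g \<in> PiE I (\<lambda>_. UNIV)" using assms(2) by (auto simp: space_PiM)
  have "{g} = PiE I (\<lambda>i. {g i})" using g
    by (auto simp: PiE_def extensional_def Pi_def fun_eq_iff) metis
  also have "\<dots> \<in> sets (PiM I (\<lambda>_. count_space (UNIV::'a set)))"
    by (rule sets_PiM_I_finite) (auto simp: assms(1))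
  finally show "{g} \<in> sets (PiM I (\<lambda>_. count_space (UNIV::'a set)))" .
qed

lemma meas_fin:
  assumes "finite I"
  shows "(f :: _ \<Rightarrow> 'b::countable) \<in> measurable (PiM I (\<lambda>_. count_space (UNIV::'a::countable set))) (count_space UNIV)"
  unfolding measurable_count_space_eq2_countable
  by (auto intro!: sets_fin_cnt assms)

lemma sets_PiM_nu: "sets (PiM I (\<lambda>_. measure_pmf (p :: 'a pmf))) = sets (PiM I (\<lambda>_. count_space UNIV))"
  by (intro sets_PiM_cong) auto

lemma incs_meas: "(\<lambda>f. incs f n) \<in> measurable (PiM UNIV (\<lambda>_. count_space UNIV)) (count_space UNIV)"
proof -
  have "(\<lambda>f. incs (restrict f {..<Suc n}) n) \<in> measurable (PiM UNIV (\<lambda>_. count_space UNIV)) (count_space UNIV)"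
    by (rule measurable_compose[OF measurable_restrict_subset meas_fin]) auto
  moreover have "incs (restrict f {..<Suc n}) n = incs f n" for f
    by (rule incs_local) auto
  ultimately show ?thesis by simp
qed

lemma Psi_meas: "(\<lambda>f n. incs f n) \<in> measurable (PiM UNIV (\<lambda>_. count_space UNIV)) (PiM UNIV (\<lambda>_::nat. count_space UNIV))"
  by (rule measurable_PiM_single') (auto intro: incs_meas)

lemma PiM_fin_Pi_pmf:
  assumes "finite I" "I \<noteq> {}"
  shows "distr (measure_pmf (Pi_pmf I d (\<lambda>_. p))) (PiM I (\<lambda>_. count_space UNIV)) (\<lambda>x. restrict x I)
     = PiM I (\<lambda>_. measure_pmf p)"
proof -
  note False = assms(2)
  have "distr (measure_pmf (Pi_pmf I d (\<lambda>_. p))) (PiM I (\<lambda>_. count_space UNIV)) (\<lambda>x. restrict x I)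
     = PiM I (\<lambda>i. distr (measure_pmf (Pi_pmf I d (\<lambda>_. p))) (count_space UNIV) (\<lambda>f. f i))"
    using prob_space.indep_vars_iff_distr_eq_PiM'[where M="measure_pmf (Pi_pmf I d (\<lambda>_. p))" and I=I and M'="\<lambda>_. count_space UNIV" and X="\<lambda>x f. f x", OF measure_pmf.prob_space_axioms False]
      indep_vars_Pi_pmf[OF assms(1), of d "\<lambda>_. p"] by simp
  also have "\<dots> = PiM I (\<lambda>_. measure_pmf p)"
  proof (rule PiM_cong)
    fix i assume "i \<in> I"
    then show "distr (measure_pmf (Pi_pmf I d (\<lambda>_. p))) (count_space UNIV) (\<lambda>f. f i) = measure_pmf p"
      using Pi_pmf_component[OF assms(1), of i d "\<lambda>_. p"] by (metis map_pmf_rep_eq)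
  qed simp
  finally show ?thesis .
qed


lemma Psi_meas_nu: "(\<lambda>f n. incs f n) \<in> measurable (PiM UNIV (\<lambda>_::nat. measure_pmf nu)) (PiM UNIV (\<lambda>_::nat. count_space UNIV))"
  by (subst measurable_cong_sets[OF sets_PiM_nu refl]) (rule Psi_meas)

lemma Psi_law:
  "distr (PiM UNIV (\<lambda>_::nat. measure_pmf nu)) (PiM UNIV (\<lambda>_::nat. count_space UNIV)) (\<lambda>f n. incs f n)
     = PiM UNIV (\<lambda>_::nat. measure_pmf (map_pmf snd nu))"
proof (rule measure_eqI_PiM_infinite[where M="\<lambda>_. count_space UNIV"])
  show "sets (distr (PiM UNIV (\<lambda>_::nat. measure_pmf nu)) (PiM UNIV (\<lambda>_::nat. count_space UNIV)) (\<lambda>f n. incs f n))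
      = sets (PiM UNIV (\<lambda>_::nat. count_space (UNIV::int set)))" by simp
  show "sets (PiM UNIV (\<lambda>_::nat. measure_pmf (map_pmf snd nu))) = sets (PiM UNIV (\<lambda>_::nat. count_space (UNIV::int set)))"
    by (rule sets_PiM_nu)
  show "finite_measure (distr (PiM UNIV (\<lambda>_::nat. measure_pmf nu)) (PiM UNIV (\<lambda>_::nat. count_space UNIV)) (\<lambda>f n. incs f n))"
  proof -
    interpret PP: product_prob_space "\<lambda>_::nat. measure_pmf nu" UNIV
      by (rule product_prob_spaceI) (rule measure_pmf.prob_space_axioms)
    have "prob_space (distr (PiM UNIV (\<lambda>_::nat. measure_pmf nu)) (PiM UNIV (\<lambda>_::nat. count_space UNIV)) (\<lambda>f n. incs f n))"
      by (rule PP.P.prob_space_distr) (rule Psi_meas_nu)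
    then show ?thesis by (simp add: prob_space_def)
  qed
  fix J :: "nat set" and A :: "nat \<Rightarrow> int set"
  assume J: "finite J" "J \<subseteq> UNIV" and A: "\<And>i. i \<in> J \<Longrightarrow> A i \<in> sets (count_space UNIV)"
  interpret PP: product_prob_space "\<lambda>_::nat. measure_pmf nu" UNIV
    by (rule product_prob_spaceI) (rule measure_pmf.prob_space_axioms)
  define n where "n = Suc (Max (insert 0 J))"
  have Jn: "j \<in> J \<Longrightarrow> j < n" for j
    using J(1) unfolding n_def by (simp add: le_imp_less_Suc)
  have n0: "{..<n} \<noteq> {}" unfolding n_def by auto
  let ?E = "prod_emb UNIV (\<lambda>_. count_space UNIV) J (Pi\<^sub>E J A)"
  define S where "S = {g \<in> PiE {..<n} (\<lambda>_. UNIV). \<forall>j\<in>J. incs g j \<in> A j}"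
  define B where "B = (\<lambda>k. if k \<in> J then A k else UNIV)"
  have meas: "(\<lambda>f n. incs f n) \<in> measurable (PiM UNIV (\<lambda>_::nat. measure_pmf nu)) (PiM UNIV (\<lambda>_::nat. count_space UNIV))"
    by (rule Psi_meas_nu)
  have E: "?E \<in> sets (PiM UNIV (\<lambda>_::nat. count_space UNIV))"
    using J A by (intro sets_PiM_I) auto
  have loc: "incs (restrict f {..<n}) j = incs f j" if "j \<in> J" for f j
    by (rule incs_local) (use Jn[OF that] in auto)
  have pre: "(\<lambda>f n. incs f n) -` ?E \<inter> space (PiM UNIV (\<lambda>_::nat. measure_pmf nu))
      = prod_emb UNIV (\<lambda>_. measure_pmf nu) {..<n} S"
    by (auto simp: prod_emb_def space_PiM S_def loc PiE_def extensional_def Pi_iff)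
  have Ssets: "S \<in> sets (PiM {..<n} (\<lambda>_. measure_pmf nu))"
    unfolding sets_PiM_nu by (rule sets_fin_cnt) (auto simp: S_def space_PiM)
  have "emeasure (distr (PiM UNIV (\<lambda>_::nat. measure_pmf nu)) (PiM UNIV (\<lambda>_::nat. count_space UNIV)) (\<lambda>f n. incs f n)) ?E
      = emeasure (PiM UNIV (\<lambda>_::nat. measure_pmf nu)) (prod_emb UNIV (\<lambda>_. measure_pmf nu) {..<n} S)"
    by (simp add: emeasure_distr[OF meas E] pre)
  also have "\<dots> = emeasure (PiM {..<n} (\<lambda>_. measure_pmf nu)) S"
    by (rule PP.emeasure_PiM_emb') (auto simp: Ssets)
  also have "\<dots> = emeasure (distr (measure_pmf (Pi_pmf {..<n} undefined (\<lambda>_. nu))) (PiM {..<n} (\<lambda>_. count_space UNIV)) (\<lambda>x. restrict x {..<n})) S"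
    by (simp add: PiM_fin_Pi_pmf n0)
  also have "\<dots> = emeasure (measure_pmf (Pi_pmf {..<n} undefined (\<lambda>_. nu))) ((\<lambda>x. restrict x {..<n}) -` S)"
    using Ssets unfolding sets_PiM_nu by (subst emeasure_distr) (auto simp: space_PiM)
  also have "(\<lambda>x. restrict x {..<n}) -` S = H n -` Pi {..<n} B"
    by (auto simp: S_def B_def H_def loc Jn Pi_iff) (metis Jn lessThan_iff)
  also have "emeasure (measure_pmf (Pi_pmf {..<n} undefined (\<lambda>_. nu))) (H n -` Pi {..<n} B)
      = emeasure (measure_pmf (map_pmf (H n) (Pi_pmf {..<n} undefined (\<lambda>_. nu)))) (Pi {..<n} B)"
    by simp
  also have "\<dots> = ennreal (measure_pmf.prob (Pi_pmf {..<n} 0 (\<lambda>_. map_pmf snd nu)) (Pi {..<n} B))"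
    by (simp add: Pi_H measure_pmf.emeasure_eq_measure)
  also have "\<dots> = ennreal (\<Prod>k\<in>{..<n}. measure_pmf.prob (map_pmf snd nu) (B k))"
    by (simp add: measure_Pi_pmf_Pi)
  also have "(\<Prod>k\<in>{..<n}. measure_pmf.prob (map_pmf snd nu) (B k)) = (\<Prod>k\<in>J. measure_pmf.prob (map_pmf snd nu) (A k))"
  proof -
    have sub: "J \<subseteq> {..<n}" using Jn by auto
    have "(\<Prod>k\<in>{..<n}. measure_pmf.prob (map_pmf snd nu) (B k))
        = (\<Prod>k\<in>{..<n} - J. measure_pmf.prob (map_pmf snd nu) (B k)) * (\<Prod>k\<in>J. measure_pmf.prob (map_pmf snd nu) (B k))"
      by (rule prod.subset_diff[OF sub]) simp
    also have "(\<Prod>k\<in>{..<n} - J. measure_pmf.prob (map_pmf snd nu) (B k)) = 1"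
      by (rule prod.neutral) (auto simp: B_def)
    also have "(\<Prod>k\<in>J. measure_pmf.prob (map_pmf snd nu) (B k)) = (\<Prod>k\<in>J. measure_pmf.prob (map_pmf snd nu) (A k))"
      by (rule prod.cong) (auto simp: B_def)
    finally show ?thesis by simp
  qed
  also have "ennreal (\<Prod>k\<in>J. measure_pmf.prob (map_pmf snd nu) (A k)) = (\<Prod>k\<in>J. emeasure (measure_pmf (map_pmf snd nu)) (A k))"
    by (simp add: measure_pmf.emeasure_eq_measure prod_ennreal)
  also have "\<dots> = emeasure (PiM UNIV (\<lambda>_::nat. measure_pmf (map_pmf snd nu))) (prod_emb UNIV (\<lambda>_. measure_pmf (map_pmf snd nu)) J (Pi\<^sub>E J A))"
    by (rule emeasure_PiM_emb[symmetric]) (auto simp: J measure_pmf.prob_space_axioms)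
  also have "prod_emb UNIV (\<lambda>_. measure_pmf (map_pmf snd nu)) J (Pi\<^sub>E J A) = ?E"
    by (simp add: prod_emb_def)
  finally show "emeasure (distr (PiM UNIV (\<lambda>_::nat. measure_pmf nu)) (PiM UNIV (\<lambda>_::nat. count_space UNIV)) (\<lambda>f n. incs f n)) ?E
      = emeasure (PiM UNIV (\<lambda>_::nat. measure_pmf (map_pmf snd nu))) ?E" .
qed


lemma psum_meas: "(\<lambda>\<eta> n. \<Sum>k<n. \<eta> k) \<in> measurable (PiM UNIV (\<lambda>_::nat. count_space (UNIV::int set))) (PiM UNIV (\<lambda>_::nat. count_space (UNIV::int set)))"
proof (rule measurable_PiM_single')
  fix n :: nat
  have "(\<lambda>\<eta>. \<Sum>k<n. (restrict \<eta> {..<n}) k) \<in> measurable (PiM UNIV (\<lambda>_::nat. count_space (UNIV::int set))) (count_space UNIV)"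
  proof (rule measurable_compose[OF measurable_restrict_subset])
    show "(\<lambda>g::nat\<Rightarrow>int. \<Sum>k<n. g k) \<in> measurable (PiM {..<n} (\<lambda>_. count_space UNIV)) (count_space UNIV)"
      by (rule meas_fin) simp
  qed simp
  then show "(\<lambda>\<eta>. \<Sum>k<n. \<eta> k) \<in> measurable (PiM UNIV (\<lambda>_::nat. count_space (UNIV::int set))) (count_space UNIV)"
    by simp
qed auto

theorem proposition3p3:
  fixes M :: "'a measure" and xi :: "int \<Rightarrow> 'a \<Rightarrow> int \<times> int" and t :: int
  assumes "prob_space M"
    and "prob_space.indep_vars M (\<lambda>_. count_space UNIV) xi UNIV"
    and "\<And>l. distr M (count_space UNIV) (xi l) = measure_pmf nu"
  shows "distr M (PiM UNIV (\<lambda>_::nat. count_space (UNIV::int set)))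
            (\<lambda>\<omega> n. cwp (\<lambda>l. xi l \<omega>) t n)
       = distr (PiM UNIV (\<lambda>_::nat. measure_pmf (map_pmf snd nu)))
            (PiM UNIV (\<lambda>_::nat. count_space (UNIV::int set)))
            (\<lambda>\<eta> n. \<Sum>k<n. \<eta> k)
     \<and> map_pmf snd nu = map_pmf (\<lambda>w. - fst w) nu"
proof
  show "map_pmf snd nu = map_pmf (\<lambda>w. - fst w) nu" by (rule step_sym)
  interpret prob_space M by fact
  let ?C = "PiM UNIV (\<lambda>_::nat. count_space (UNIV::int set))"
  let ?Dint = "PiM UNIV (\<lambda>_::int. measure_pmf nu)"
  let ?Dnat = "PiM UNIV (\<lambda>_::nat. measure_pmf nu)"
  let ?Dstep = "PiM UNIV (\<lambda>_::nat. measure_pmf (map_pmf snd nu))"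
  let ?X = "\<lambda>\<omega> i. xi i \<omega>"
  let ?sh = "\<lambda>(\<omega>::int \<Rightarrow> int \<times> int) (n::nat). \<omega> (t + int n)"
  let ?Psi = "\<lambda>f (n::nat). incs f n"
  let ?S = "\<lambda>(\<eta>::nat \<Rightarrow> int) (n::nat). \<Sum>k<n. \<eta> k"
  have rv: "random_variable (count_space UNIV) (xi i)" for i
    using assms(2) unfolding indep_vars_def by auto
  have mX: "?X \<in> measurable M ?Dint"
    by (rule measurable_PiM_single') (auto simp: rv)
  have "distr M (PiM UNIV (\<lambda>_. count_space UNIV)) (\<lambda>x. \<lambda>i\<in>UNIV. xi i x) = PiM UNIV (\<lambda>i. distr M (count_space UNIV) (xi i))"
    using indep_vars_iff_distr_eq_PiM[where I=UNIV and M'="\<lambda>_. count_space UNIV" and X=xi] rv assms(2) by auto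
  also have "\<dots> = ?Dint" using assms(3) by simp
  finally have lawX: "distr M ?Dint ?X = ?Dint"
    by (subst distr_cong[OF refl sets_PiM_nu]) auto
  have msh: "?sh \<in> measurable ?Dint ?Dnat"
    by (rule measurable_PiM_single') (auto intro!: measurable_component_singleton)
  have "distr ?Dint ?Dnat (\<lambda>\<omega>. \<lambda>n\<in>UNIV. \<omega> (t + int n)) = ?Dnat"
    by (rule distr_PiM_reindex) (auto simp: inj_on_def measure_pmf.prob_space_axioms)
  then have lawsh: "distr ?Dint ?Dnat ?sh = ?Dnat" by (simp add: restrict_def)
  have mPsi: "?Psi \<in> measurable ?Dnat ?C" by (rule Psi_meas_nu)
  have mS: "?S \<in> measurable ?C ?C" by (rule psum_meas)
  have eq: "(\<lambda>\<omega> n. cwp (\<lambda>l. xi l \<omega>) t n) = ?S \<circ> ?Psi \<circ> ?sh \<circ> ?X"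
    by (auto simp: fun_eq_iff cwp_walk walk_sum)
  have "distr M ?C (\<lambda>\<omega> n. cwp (\<lambda>l. xi l \<omega>) t n) = distr (distr M ?Dint ?X) ?C (?S \<circ> ?Psi \<circ> ?sh)"
    unfolding eq
    by (rule distr_distr[symmetric]) (auto intro!: measurable_comp mS mPsi msh mX)
  also have "\<dots> = distr (distr ?Dint ?Dnat ?sh) ?C (?S \<circ> ?Psi)"
    unfolding lawX
    by (rule distr_distr[symmetric]) (auto intro!: measurable_comp mS mPsi msh)
  also have "\<dots> = distr (distr ?Dnat ?C ?Psi) ?C ?S"
    unfolding lawsh
    by (rule distr_distr[symmetric]) (auto intro!: mS mPsi)
  also have "\<dots> = distr ?Dstep ?C ?S"
    by (simp only: Psi_law)
  finally show "distr M ?C (\<lambda>\<omega> n. cwp (\<lambda>l. xi l \<omega>) t n) = distr ?Dstep ?C ?S" .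
qed

end
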